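(* Let $n\ge1$ and let $\alpha_1,\dots,\alpha_n$ be congruences of a group $(G,\cdot,{}^{-1},1)$. Then $[\alpha_1,\dots,\alpha_n]_{(G,\cdot,{}^{-1},1)}=[\alpha_1,\dots,\alpha_n]_{(G,\cdot)}$, i.e. the commutator computed in the group equals the commutator computed in its semigroup reduct.
   Context: For an algebra $\mathbf A$ and congruences $\alpha_1,\dots,\alpha_n$, $M_{\mathbf A}(\alpha_1,\dots,\alpha_n)$ is the subalgebra of $\mathbf A^{\{0,1\}^n}$ (operations of $\mathbf A$ pointwise) generated by all $g$ such that for some $i$ and $(a,b)\in\alpha_i$, $g(x)=a$ if $x_i=0$ and $g(x)=b$ if $x_i=1$; the commutator $[\alpha_1,\dots,\alpha_n]_{\mathbf A}$ is the smallest congruence $\delta$ of $\mathbf A$ such that for all $f\in M_{\mathbf A}(\alpha_1,\dots,\alpha_n)$: if $(f(x0),f(x1))\in\delta$ for all $x\in\{0,1\}^{n-1}\setminus\{(1,\dots,1)\}$, then $(f(1,\dots,1,0),f(1,\dots,1,1))\in\delta$. *)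

theory Defs
  imports "HOL-Algebra.Group"
begin

text \<open>An algebra is given by a carrier set A and a set F of operations; each operation
  is a pair (k, f) of an arity k and a function f acting on argument lists of length k.\<close>

type_synonym 'a ops = "(nat \<times> ('a list \<Rightarrow> 'a)) set"

definition congruence_alg :: "'a set \<Rightarrow> 'a ops \<Rightarrow> ('a \<times> 'a) set \<Rightarrow> bool" where
  "congruence_alg A F \<theta> \<longleftrightarrow> equiv A \<theta> \<and>
     (\<forall>(k, f) \<in> F. \<forall>xs ys. length xs = k \<longrightarrow> length ys = k \<longrightarrow>
        (\<forall>j < k. (xs ! j, ys ! j) \<in> \<theta>) \<longrightarrow> (f xs, f ys) \<in> \<theta>)"

text \<open>The index set {0,1}^n, as boolean lists of length n (False = 0, True = 1).\<close>
definition cube :: "nat \<Rightarrow> bool list set" where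
  "cube n = {x. length x = n}"

text \<open>M_A(alpha_1,...,alpha_n) as a subset of A^({0,1}^n); elements are functions on
  cube n, extended by undefined outside.  alpha i (i < n) stands for alpha_(i+1).\<close>
inductive_set M_alg :: "'a set \<Rightarrow> 'a ops \<Rightarrow> nat \<Rightarrow> (nat \<Rightarrow> ('a \<times> 'a) set)
    \<Rightarrow> (bool list \<Rightarrow> 'a) set"
  for A F n \<alpha> where
  gen: "\<lbrakk>i < n; (a, b) \<in> \<alpha> i\<rbrakk> \<Longrightarrow>
     (\<lambda>x. if x \<in> cube n then (if x ! i then b else a) else undefined) \<in> M_alg A F n \<alpha>"
| op: "\<lbrakk>(k, f) \<in> F; length gs = k; \<forall>g \<in> set gs. g \<in> M_alg A F n \<alpha>\<rbrakk> \<Longrightarrow>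
     (\<lambda>x. if x \<in> cube n then f (map (\<lambda>g. g x) gs) else undefined) \<in> M_alg A F n \<alpha>"

definition centralizes :: "'a set \<Rightarrow> 'a ops \<Rightarrow> nat \<Rightarrow> (nat \<Rightarrow> ('a \<times> 'a) set)
    \<Rightarrow> ('a \<times> 'a) set \<Rightarrow> bool" where
  "centralizes A F n \<alpha> \<delta> \<longleftrightarrow>
     (\<forall>f \<in> M_alg A F n \<alpha>.
        (\<forall>x \<in> cube (n - 1). x \<noteq> replicate (n - 1) True \<longrightarrow>
            (f (x @ [False]), f (x @ [True])) \<in> \<delta>) \<longrightarrow>
        (f (replicate (n - 1) True @ [False]), f (replicate (n - 1) True @ [True])) \<in> \<delta>)"

definition commutator :: "'a set \<Rightarrow> 'a ops \<Rightarrow> nat \<Rightarrow> (nat \<Rightarrow> ('a \<times> 'a) set)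
    \<Rightarrow> ('a \<times> 'a) set" where
  "commutator A F n \<alpha> = \<Inter> {\<delta>. congruence_alg A F \<delta> \<and> centralizes A F n \<alpha> \<delta>}"

definition group_ops :: "('a, 'b) monoid_scheme \<Rightarrow> 'a ops" where
  "group_ops G = {(2, \<lambda>xs. xs ! 0 \<otimes>\<^bsub>G\<^esub> xs ! 1), (1, \<lambda>xs. inv\<^bsub>G\<^esub> (xs ! 0)), (0, \<lambda>xs. \<one>\<^bsub>G\<^esub>)}"

definition semigroup_ops :: "('a, 'b) monoid_scheme \<Rightarrow> 'a ops" where
  "semigroup_ops G = {(2, \<lambda>xs. xs ! 0 \<otimes>\<^bsub>G\<^esub> xs ! 1)}"

end

theory Submission
  imports Defs
begin

lemma cong_app:
  assumes "congruence_alg A F \<theta>" "(k,f)\<in>F" "length xs = k" "length ys = k"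
    "\<forall>j<k. (xs!j, ys!j)\<in>\<theta>"
  shows "(f xs, f ys) \<in> \<theta>"
  using assms unfolding congruence_alg_def by blast

lemma cong_mono:
  assumes "congruence_alg A F \<theta>" "F' \<subseteq> F"
  shows "congruence_alg A F' \<theta>"
  using assms unfolding congruence_alg_def by blast

lemma semi_sub_group: "semigroup_ops G \<subseteq> group_ops G"
  unfolding semigroup_ops_def group_ops_def by simp

lemma semi_mult:
  assumes "congruence_alg A (semigroup_ops G) \<theta>" "(x,x')\<in>\<theta>" "(y,y')\<in>\<theta>"
  shows "(x \<otimes>\<^bsub>G\<^esub> y, x' \<otimes>\<^bsub>G\<^esub> y') \<in> \<theta>"
proof -
  have "\<forall>j<2. ([x,y] ! j, [x',y'] ! j) \<in> \<theta>"
    using assms(2,3) by (auto simp: less_2_cases_iff)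
  then show ?thesis
    using cong_app[OF assms(1), of 2 "\<lambda>xs. xs ! 0 \<otimes>\<^bsub>G\<^esub> xs ! 1" "[x,y]" "[x',y']"]
    by (simp add: semigroup_ops_def)
qed

lemma cong_eq:
  assumes "group G"
  shows "congruence_alg (carrier G) (group_ops G) \<theta> = congruence_alg (carrier G) (semigroup_ops G) \<theta>"
proof
  assume "congruence_alg (carrier G) (group_ops G) \<theta>"
  then show "congruence_alg (carrier G) (semigroup_ops G) \<theta>"
    by (rule cong_mono[OF _ semi_sub_group])
next
  assume c: "congruence_alg (carrier G) (semigroup_ops G) \<theta>"
  interpret group G by fact
  have eq: "equiv (carrier G) \<theta>" using c unfolding congruence_alg_def by blast
  have sub: "\<theta> \<subseteq> carrier G \<times> carrier G" using eq unfolding equiv_def refl_on_def by blast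
  have rfl: "x \<in> carrier G \<Longrightarrow> (x,x) \<in> \<theta>" for x using eq unfolding equiv_def refl_on_def by blast
  have invc: "(inv\<^bsub>G\<^esub> a, inv\<^bsub>G\<^esub> b) \<in> \<theta>" if ab: "(a,b)\<in>\<theta>" for a b
  proof -
    have a: "a \<in> carrier G" and b: "b \<in> carrier G" using ab sub by auto
    have ba: "(b,a) \<in> \<theta>" using ab eq unfolding equiv_def sym_def by blast
    have s1: "(b \<otimes>\<^bsub>G\<^esub> inv\<^bsub>G\<^esub> b, a \<otimes>\<^bsub>G\<^esub> inv\<^bsub>G\<^esub> b) \<in> \<theta>" by (rule semi_mult[OF c ba rfl[OF inv_closed[OF b]]])
    have s2: "(inv\<^bsub>G\<^esub> a \<otimes>\<^bsub>G\<^esub> (b \<otimes>\<^bsub>G\<^esub> inv\<^bsub>G\<^esub> b), inv\<^bsub>G\<^esub> a \<otimes>\<^bsub>G\<^esub> (a \<otimes>\<^bsub>G\<^esub> inv\<^bsub>G\<^esub> b)) \<in> \<theta>"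
      by (rule semi_mult[OF c rfl[OF inv_closed[OF a]] s1])
    then show ?thesis using s2 a b by (simp add: m_assoc[symmetric])
  qed
  have key: "(f xs, f ys) \<in> \<theta>" if kf: "(k,f) \<in> group_ops G" and l: "length xs = k" "length ys = k"
      and r: "\<forall>j<k. (xs ! j, ys ! j) \<in> \<theta>" for k f xs ys
  proof -
    from kf consider "k = 2" "f = (\<lambda>xs. xs ! 0 \<otimes>\<^bsub>G\<^esub> xs ! 1)" | "k = 1" "f = (\<lambda>xs. inv\<^bsub>G\<^esub> (xs ! 0))"
      | "k = 0" "f = (\<lambda>xs. \<one>\<^bsub>G\<^esub>)" unfolding group_ops_def by auto
    then show "(f xs, f ys) \<in> \<theta>"
    proof cases
      case 1
      then show ?thesis using r semi_mult[OF c, of "xs!0" "ys!0" "xs!1" "ys!1"] by simp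
    next
      case 2
      then show ?thesis using r invc by simp
    next
      case 3
      then show ?thesis using rfl by simp
    qed
  qed
  show "congruence_alg (carrier G) (group_ops G) \<theta>"
    unfolding congruence_alg_def using eq key by fast
qed

lemma M_semi_sub:
  "f \<in> M_alg A (semigroup_ops G) n \<alpha> \<Longrightarrow> f \<in> M_alg A (group_ops G) n \<alpha>"
proof (induction rule: M_alg.induct)
  case (gen i a b) then show ?case by (rule M_alg.gen)
next
  case (op k f gs)
  then have "(k,f) \<in> group_ops G" unfolding group_ops_def semigroup_ops_def by auto
  then show ?case using op by (intro M_alg.op) auto
qed

lemma M_group_sub:
  assumes G: "group G" and n: "n \<ge> 1"
    and ca: "\<And>i. i < n \<Longrightarrow> congruence_alg (carrier G) (group_ops G) (\<alpha> i)"
    and f: "f \<in> M_alg A (group_ops G) n \<alpha>"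
  shows "f \<in> M_alg A (semigroup_ops G) n \<alpha>
    \<and> (\<lambda>x. if x \<in> cube n then inv\<^bsub>G\<^esub> (f x) else undefined) \<in> M_alg A (semigroup_ops G) n \<alpha>
    \<and> (\<forall>x \<in> cube n. f x \<in> carrier G) \<and> (\<forall>x. x \<notin> cube n \<longrightarrow> f x = undefined)"
  using f
proof (induction rule: M_alg.induct)
  case (gen i a b)
  interpret group G by fact
  have c: "congruence_alg (carrier G) (group_ops G) (\<alpha> i)" using ca gen by auto
  have ab: "a \<in> carrier G" "b \<in> carrier G" using c gen(2)
    unfolding congruence_alg_def equiv_def refl_on_def by blast+
  have inab: "(inv\<^bsub>G\<^esub> a, inv\<^bsub>G\<^esub> b) \<in> \<alpha> i"
  proof -
    have "(1::nat, \<lambda>xs. inv\<^bsub>G\<^esub> (xs ! 0)) \<in> group_ops G" unfolding group_ops_def by auto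
    moreover have "\<forall>j<1. ([a] ! j, [b] ! j) \<in> \<alpha> i" using gen by auto
    ultimately have "((\<lambda>xs. inv\<^bsub>G\<^esub> (xs ! 0)) [a], (\<lambda>xs. inv\<^bsub>G\<^esub> (xs ! 0)) [b]) \<in> \<alpha> i"
      by (intro cong_app[OF c]) auto
    then show ?thesis by simp
  qed
  have eqf: "(\<lambda>x. if x\<in>cube n then inv\<^bsub>G\<^esub> (if x!i then b else a) else undefined) = (\<lambda>x. if x\<in>cube n then (if x!i then inv\<^bsub>G\<^esub> b else inv\<^bsub>G\<^esub> a) else undefined)"
    by (rule ext) simp
  from M_alg.gen[where A=A and F="semigroup_ops G" and n=n and \<alpha>=\<alpha> and i=i and a="inv\<^bsub>G\<^esub> a" and b="inv\<^bsub>G\<^esub> b", OF gen(1) inab]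
  have "(\<lambda>x. if x \<in> cube n then inv\<^bsub>G\<^esub> (if x ! i then b else a) else undefined) \<in> M_alg A (semigroup_ops G) n \<alpha>"
    unfolding eqf .
  moreover have "(\<lambda>x. if x \<in> cube n then (if x ! i then b else a) else undefined) \<in> M_alg A (semigroup_ops G) n \<alpha>"
    by (rule M_alg.gen[where A=A and F="semigroup_ops G" and n=n and \<alpha>=\<alpha> and i=i and a=a and b=b, OF gen(1,2)])
  ultimately show ?case using ab by (simp cong: if_cong)
next
  case (op k f gs)
  interpret group G by fact
  from op(1) consider "k = 2" "f = (\<lambda>xs. xs ! 0 \<otimes>\<^bsub>G\<^esub> xs ! 1)" | "k = 1" "f = (\<lambda>xs. inv\<^bsub>G\<^esub> (xs ! 0))"
      | "k = 0" "f = (\<lambda>xs. \<one>\<^bsub>G\<^esub>)" unfolding group_ops_def by auto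
  then show ?case
  proof cases
    case 1
    note kf = this
    then obtain g1 g2 where gs: "gs = [g1, g2]" using op(2)
      by (auto simp: numeral_2_eq_2 length_Suc_conv)
    have h1: "g1 \<in> M_alg A (semigroup_ops G) n \<alpha>"
      "(\<lambda>x. if x \<in> cube n then inv\<^bsub>G\<^esub> (g1 x) else undefined) \<in> M_alg A (semigroup_ops G) n \<alpha>"
      "\<forall>x \<in> cube n. g1 x \<in> carrier G" using op(3) gs by auto
    have h2: "g2 \<in> M_alg A (semigroup_ops G) n \<alpha>"
      "(\<lambda>x. if x \<in> cube n then inv\<^bsub>G\<^esub> (g2 x) else undefined) \<in> M_alg A (semigroup_ops G) n \<alpha>"
      "\<forall>x \<in> cube n. g2 x \<in> carrier G" using op(3) gs by auto
    have so: "(2, \<lambda>xs. xs ! 0 \<otimes>\<^bsub>G\<^esub> xs ! 1) \<in> semigroup_ops G" unfolding semigroup_ops_def by simp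
    have A1: "(\<lambda>x. if x \<in> cube n then f (map (\<lambda>g. g x) gs) else undefined) \<in> M_alg A (semigroup_ops G) n \<alpha>"
    proof (rule M_alg.op[OF _ op(2)])
      show "(k, f) \<in> semigroup_ops G" using kf by (simp add: semigroup_ops_def)
    qed (use h1 h2 gs in auto)
    have A2': "(\<lambda>x. if x \<in> cube n then (\<lambda>xs. xs ! 0 \<otimes>\<^bsub>G\<^esub> xs ! 1) (map (\<lambda>g. g x)
        [(\<lambda>x. if x \<in> cube n then inv\<^bsub>G\<^esub> (g2 x) else undefined), (\<lambda>x. if x \<in> cube n then inv\<^bsub>G\<^esub> (g1 x) else undefined)])
        else undefined) \<in> M_alg A (semigroup_ops G) n \<alpha>"
      by (rule M_alg.op[OF so]) (use h1 h2 in auto)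
    have "(\<lambda>x. if x \<in> cube n then inv\<^bsub>G\<^esub> (if x \<in> cube n then f (map (\<lambda>g. g x) gs) else undefined) else undefined)
       = (\<lambda>x. if x \<in> cube n then (\<lambda>xs. xs ! 0 \<otimes>\<^bsub>G\<^esub> xs ! 1) (map (\<lambda>g. g x)
        [(\<lambda>x. if x \<in> cube n then inv\<^bsub>G\<^esub> (g2 x) else undefined), (\<lambda>x. if x \<in> cube n then inv\<^bsub>G\<^esub> (g1 x) else undefined)])
        else undefined)"
      using h1(3) h2(3) by (auto simp: kf gs inv_mult_group)
    with A2' have A2: "(\<lambda>x. if x \<in> cube n then inv\<^bsub>G\<^esub> (if x \<in> cube n then f (map (\<lambda>g. g x) gs) else undefined) else undefined) \<in> M_alg A (semigroup_ops G) n \<alpha>"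
      by simp
    show ?thesis using A1 A2 h1(3) h2(3) by (auto simp: kf gs)
  next
    case 2
    note kf = this
    then obtain g where gs: "gs = [g]" using op(2) by (auto simp: length_Suc_conv)
    have h: "g \<in> M_alg A (semigroup_ops G) n \<alpha>"
      "(\<lambda>x. if x \<in> cube n then inv\<^bsub>G\<^esub> (g x) else undefined) \<in> M_alg A (semigroup_ops G) n \<alpha>"
      "\<forall>x \<in> cube n. g x \<in> carrier G" "\<forall>x. x \<notin> cube n \<longrightarrow> g x = undefined" using op(3) gs by auto
    have e: "(\<lambda>x. if x \<in> cube n then inv\<^bsub>G\<^esub> (if x \<in> cube n then f (map (\<lambda>g. g x) gs) else undefined) else undefined) = g"
    proof (rule ext)
      fix x show "(if x \<in> cube n then inv\<^bsub>G\<^esub> (if x \<in> cube n then f (map (\<lambda>g. g x) gs) else undefined) else undefined) = g x"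
      proof (cases "x \<in> cube n")
        case True
        then have "g x \<in> carrier G" using h(3) by blast
        then show ?thesis using True by (simp add: kf gs)
      next
        case False
        then show ?thesis using h(4) by simp
      qed
    qed
    have r1: "(\<lambda>x. if x \<in> cube n then f (map (\<lambda>g. g x) gs) else undefined) = (\<lambda>x. if x \<in> cube n then inv\<^bsub>G\<^esub> (g x) else undefined)"
      using kf gs by auto
    have c1: "(\<lambda>x. if x \<in> cube n then f (map (\<lambda>g. g x) gs) else undefined) \<in> M_alg A (semigroup_ops G) n \<alpha>"
      unfolding r1 by (rule h(2))
    have c2: "(\<lambda>x. if x \<in> cube n then inv\<^bsub>G\<^esub> (if x \<in> cube n then f (map (\<lambda>g. g x) gs) else undefined) else undefined) \<in> M_alg A (semigroup_ops G) n \<alpha>"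
      unfolding e by (rule h(1))
    have c3: "\<forall>x\<in>cube n. (if x \<in> cube n then f (map (\<lambda>g. g x) gs) else undefined) \<in> carrier G"
      using h(3) kf gs by auto
    have c4: "\<forall>x. x \<notin> cube n \<longrightarrow> (if x \<in> cube n then f (map (\<lambda>g. g x) gs) else undefined) = undefined"
      by simp
    show ?thesis using c1 c2 c3 c4 by (intro conjI)
  next
    case 3
    note kf = this
    then have gs: "gs = []" using op(2) by auto
    have c: "congruence_alg (carrier G) (group_ops G) (\<alpha> 0)" using ca n by auto
    have "(\<one>\<^bsub>G\<^esub>, \<one>\<^bsub>G\<^esub>) \<in> \<alpha> 0" using c unfolding congruence_alg_def equiv_def refl_on_def by auto
    from M_alg.gen[where A=A and F="semigroup_ops G" and n=n and \<alpha>=\<alpha> and i=0, OF _ this] n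
    have g: "(\<lambda>x. if x \<in> cube n then \<one>\<^bsub>G\<^esub> else undefined) \<in> M_alg A (semigroup_ops G) n \<alpha>" by (simp cong: if_cong)
    have e: "(\<lambda>x. if x \<in> cube n then inv\<^bsub>G\<^esub> (if x \<in> cube n then f (map (\<lambda>g. g x) gs) else undefined) else undefined)
      = (\<lambda>x. if x \<in> cube n then \<one>\<^bsub>G\<^esub> else undefined)" by (auto simp: kf)
    have c1: "(\<lambda>x. if x \<in> cube n then f (map (\<lambda>g. g x) gs) else undefined) = (\<lambda>x. if x \<in> cube n then \<one>\<^bsub>G\<^esub> else undefined)"
      using kf by auto
    have c2: "(\<lambda>x. if x \<in> cube n then f (map (\<lambda>g. g x) gs) else undefined) \<in> M_alg A (semigroup_ops G) n \<alpha>"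
      unfolding c1 by (rule g)
    have c3: "(\<lambda>x. if x \<in> cube n then inv\<^bsub>G\<^esub> (if x \<in> cube n then f (map (\<lambda>g. g x) gs) else undefined) else undefined) \<in> M_alg A (semigroup_ops G) n \<alpha>"
      unfolding e by (rule g)
    have c4: "\<forall>x\<in>cube n. (if x \<in> cube n then f (map (\<lambda>g. g x) gs) else undefined) \<in> carrier G"
      using kf by simp
    have c5: "\<forall>x. x \<notin> cube n \<longrightarrow> (if x \<in> cube n then f (map (\<lambda>g. g x) gs) else undefined) = undefined"
      by simp
    show ?thesis using c2 c3 c4 c5 by (intro conjI)
  qed
qed

theorem lemma2p3:
  fixes G :: "('a, 'b) monoid_scheme" and n :: nat and \<alpha> :: "nat \<Rightarrow> ('a \<times> 'a) set"
  assumes "group G" and "n \<ge> 1"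
    and "\<And>i. i < n \<Longrightarrow> congruence_alg (carrier G) (group_ops G) (\<alpha> i)"
  shows "commutator (carrier G) (group_ops G) n \<alpha> = commutator (carrier G) (semigroup_ops G) n \<alpha>"
proof -
  have M: "M_alg (carrier G) (group_ops G) n \<alpha> = M_alg (carrier G) (semigroup_ops G) n \<alpha>"
  proof (rule subset_antisym; rule subsetI)
    fix f assume "f \<in> M_alg (carrier G) (group_ops G) n \<alpha>"
    then show "f \<in> M_alg (carrier G) (semigroup_ops G) n \<alpha>"
      using M_group_sub[of G n \<alpha> f "carrier G", OF assms(1,2) assms(3)] by blast
  next
    fix f assume "f \<in> M_alg (carrier G) (semigroup_ops G) n \<alpha>"
    then show "f \<in> M_alg (carrier G) (group_ops G) n \<alpha>" by (rule M_semi_sub)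
  qed
  have "centralizes (carrier G) (group_ops G) n \<alpha> = centralizes (carrier G) (semigroup_ops G) n \<alpha>"
    unfolding centralizes_def M ..
  then show ?thesis unfolding commutator_def cong_eq[OF assms(1)] by simp
qed

end
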